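(* Let $R$ be a Noetherian ring and $\phi$ an $m\times s$ matrix with entries in $R$. Suppose $I_1(\phi)\subseteq(a_1,\dots,a_r)$ and $a_1,\dots,a_r$ is an $R$-regular sequence. Then for every $i\ge1$, the ideal $\mathcal L+I_r(B_i(\phi))$ of $R[T_1,\dots,T_m]$ does not depend on the choices made in the construction of the $i$-th iterated Jacobian dual $B_i(\phi)$; i.e., it is uniquely determined by $\phi$ and $a_1,\dots,a_r$.
   Context: Grade $R[T_1,\dots,T_m]$ by $\deg T_j=1$, $\deg R=0$. $\mathcal L$ is the ideal generated by the entries of $[T_1\cdots T_m]\cdot\phi$. For a matrix $M$ with $r$ rows, $(\underline a\cdot M)$ denotes the ideal generated by the entries of $[a_1\cdots a_r]\cdot M$, and $I_r(M)$ its ideal of $r\times r$ minors. Iterated Jacobian duals: $B_1(\phi)$ is any $r\times s$ matrix with entries linear forms in $T_1,\dots,T_m$ with coefficients in $R$ such that $[T_1\cdots T_m]\cdot\phi=[a_1\cdots a_r]\cdot B_1(\phi)$; set $\mathcal L_1=\mathcal L$. Given $B_{i-1}(\phi)$ (with $r$ rows, entries homogeneous of constant degree along each column) and $\mathcal L_{i-1}=(\underline a\cdot B_{i-1}(\phi))$, choose homogeneous $u_1,\dots,u_l$ with $\mathcal L_{i-1}+(I_r(B_{i-1}(\phi))\cap(a_1,\dots,a_r))=\mathcal L_{i-1}+(u_1,\dots,u_l)$, choose a matrix $C$ with homogeneous entries of constant degree along each column with $[u_1\cdots u_l]=[a_1\cdots a_r]\cdot C$, and set $B_i(\phi)=[B_{i-1}(\phi)\,|\,C]$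 (concatenation) and $\mathcal L_i=(\underline a\cdot B_i(\phi))$. *)

theory Defs
  imports Main "HOL-Library.Poly_Mapping" "HOL-Combinatorics.Permutations"
begin

definition is_ideal :: "'a::comm_ring_1 set \<Rightarrow> bool" where
  "is_ideal I \<longleftrightarrow> 0 \<in> I \<and> (\<forall>x\<in>I. \<forall>y\<in>I. x + y \<in> I) \<and> (\<forall>x\<in>I. \<forall>c. c * x \<in> I)"

definition ideal_gen :: "'a::comm_ring_1 set \<Rightarrow> 'a set" where
  "ideal_gen S = {x. \<exists>F c. finite F \<and> F \<subseteq> S \<and> x = (\<Sum>g\<in>F. c g * g)}"

definition noetherian_ring :: "'a::comm_ring_1 itself \<Rightarrow> bool" where
  "noetherian_ring _ \<longleftrightarrow> (\<forall>I::'a set. is_ideal I \<longrightarrow> (\<exists>F. finite F \<and> I = ideal_gen F))"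

definition regular_sequence :: "(nat \<Rightarrow> 'a::comm_ring_1) \<Rightarrow> nat \<Rightarrow> bool" where
  "regular_sequence a r \<longleftrightarrow>
     (\<forall>i<r. \<forall>x. a i * x \<in> ideal_gen (a ` {..<i}) \<longrightarrow> x \<in> ideal_gen (a ` {..<i}))
     \<and> ideal_gen (a ` {..<r}) \<noteq> UNIV"

type_synonym ('v, 'a) mpoly = "('v \<Rightarrow>\<^sub>0 nat) \<Rightarrow>\<^sub>0 'a"

definition const :: "'a::comm_ring_1 \<Rightarrow> ('v, 'a) mpoly" where
  "const c = Poly_Mapping.single 0 c"

definition var :: "'v \<Rightarrow> ('v, 'a::comm_ring_1) mpoly" where
  "var v = Poly_Mapping.single (Poly_Mapping.single v 1) 1"

definition mdeg :: "('v::finite \<Rightarrow>\<^sub>0 nat) \<Rightarrow> nat" where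
  "mdeg \<mu> = (\<Sum>v\<in>UNIV. Poly_Mapping.lookup \<mu> v)"

text \<open>p is homogeneous of degree d (deg T_v = 1, deg R = 0); 0 is homogeneous of every degree.\<close>
definition homogeneous :: "('v::finite, 'a::comm_ring_1) mpoly \<Rightarrow> nat \<Rightarrow> bool" where
  "homogeneous p d \<longleftrightarrow> (\<forall>\<mu>\<in>Poly_Mapping.keys p. mdeg \<mu> = d)"

definition det_n :: "nat \<Rightarrow> (nat \<Rightarrow> nat \<Rightarrow> 'b::comm_ring_1) \<Rightarrow> 'b" where
  "det_n n M = (\<Sum>p | p permutes {..<n}. of_int (sign p) * (\<Prod>i<n. M i (p i)))"

text \<open>I_r(M) for a matrix M with r rows and n columns: ideal generated by all r x r minors
  (column selections c; non-injective selections only contribute 0).\<close>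
definition minors_ideal :: "nat \<Rightarrow> (nat \<Rightarrow> nat \<Rightarrow> 'b::comm_ring_1) \<Rightarrow> nat \<Rightarrow> 'b set" where
  "minors_ideal r M n = ideal_gen {det_n r (\<lambda>i k. M i (c k)) | c. c ` {..<r} \<subseteq> {..<n}}"

definition ideal_a :: "(nat \<Rightarrow> 'a::comm_ring_1) \<Rightarrow> nat \<Rightarrow> ('v, 'a) mpoly set" where
  "ideal_a a r = ideal_gen ((\<lambda>i. const (a i)) ` {..<r})"

definition a_times :: "(nat \<Rightarrow> 'a::comm_ring_1) \<Rightarrow> nat \<Rightarrow> (nat \<Rightarrow> nat \<Rightarrow> ('v, 'a) mpoly) \<Rightarrow> nat \<Rightarrow> ('v, 'a) mpoly"
  where "a_times a r M k = (\<Sum>i<r. const (a i) * M i k)"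

definition a_ideal :: "(nat \<Rightarrow> 'a::comm_ring_1) \<Rightarrow> nat \<Rightarrow> (nat \<Rightarrow> nat \<Rightarrow> ('v, 'a) mpoly) \<Rightarrow> nat \<Rightarrow> ('v, 'a) mpoly set"
  where "a_ideal a r M n = ideal_gen (a_times a r M ` {..<n})"

text \<open>The ideal L generated by the entries of [T_1 ... T_m] . phi (phi is m x s, rows indexed by 'v).\<close>
definition L_ideal :: "('v::finite \<Rightarrow> nat \<Rightarrow> 'a::comm_ring_1) \<Rightarrow> nat \<Rightarrow> ('v, 'a) mpoly set" where
  "L_ideal \<phi> s = ideal_gen ((\<lambda>k. \<Sum>v\<in>UNIV. var v * const (\<phi> v k)) ` {..<s})"

text \<open>One step of the construction: M' (with n' columns) is [M | C], where C occupies columns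
  n..n'-1, each column of C has homogeneous entries of a common degree, the entries u_k of
  [a].C are homogeneous, and L_{i-1} + (I_r(M) \<inter> (a)) = L_{i-1} + (u).\<close>
definition jd_step :: "(nat \<Rightarrow> 'a::comm_ring_1) \<Rightarrow> nat \<Rightarrow> (nat \<Rightarrow> nat \<Rightarrow> ('v::finite, 'a) mpoly) \<Rightarrow> nat
                        \<Rightarrow> (nat \<Rightarrow> nat \<Rightarrow> ('v, 'a) mpoly) \<Rightarrow> nat \<Rightarrow> bool" where
  "jd_step a r M n M' n' \<longleftrightarrow>
     n \<le> n' \<and>
     (\<forall>i<r. \<forall>k<n. M' i k = M i k) \<and>
     (\<forall>k\<in>{n..<n'}. \<exists>d. (\<forall>i<r. homogeneous (M' i k) d)) \<and>
     (\<forall>k\<in>{n..<n'}. \<exists>d. homogeneous (a_times a r M' k) d) \<and>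
     ideal_gen (a_ideal a r M n \<union> (minors_ideal r M n \<inter> ideal_a a r))
       = ideal_gen (a_ideal a r M n \<union> a_times a r M' ` {n..<n'})"

definition jd_first :: "('v::finite \<Rightarrow> nat \<Rightarrow> 'a::comm_ring_1) \<Rightarrow> nat \<Rightarrow> (nat \<Rightarrow> 'a) \<Rightarrow> nat
                         \<Rightarrow> (nat \<Rightarrow> nat \<Rightarrow> ('v, 'a) mpoly) \<Rightarrow> bool" where
  "jd_first \<phi> s a r B \<longleftrightarrow>
     (\<forall>i<r. \<forall>k<s. homogeneous (B i k) 1) \<and>
     (\<forall>k<s. (\<Sum>v\<in>UNIV. var v * const (\<phi> v k)) = a_times a r B k)"

text \<open>iterated_jd phi s a r i B n: B (with r rows and n columns) is a possible choice of the
  i-th iterated Jacobian dual B_i(phi).\<close>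
inductive iterated_jd :: "('v::finite \<Rightarrow> nat \<Rightarrow> 'a::comm_ring_1) \<Rightarrow> nat \<Rightarrow> (nat \<Rightarrow> 'a) \<Rightarrow> nat
                          \<Rightarrow> nat \<Rightarrow> (nat \<Rightarrow> nat \<Rightarrow> ('v, 'a) mpoly) \<Rightarrow> nat \<Rightarrow> bool"
  for \<phi> s a r where
  first: "jd_first \<phi> s a r B \<Longrightarrow> iterated_jd \<phi> s a r 1 B s"
| step: "iterated_jd \<phi> s a r i B n \<Longrightarrow> jd_step a r B n B' n' \<Longrightarrow> iterated_jd \<phi> s a r (Suc i) B' n'"

end

theory Submission imports Defs "Jordan_Normal_Form.Determinant" begin

section \<open>Ideal basics\<close>

lemma ideal_gen_zero: "0 \<in> ideal_gen S"
  unfolding ideal_gen_def by (rule CollectI, rule exI[of _ "{}"]) auto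

lemma ideal_gen_add:
  assumes "x \<in> ideal_gen S" "y \<in> ideal_gen S" shows "x + y \<in> ideal_gen S"
proof -
  obtain F c where F: "finite F" "F \<subseteq> S" "x = (\<Sum>g\<in>F. c g * g)" using assms(1) unfolding ideal_gen_def by blast
  obtain G d where G: "finite G" "G \<subseteq> S" "y = (\<Sum>g\<in>G. d g * g)" using assms(2) unfolding ideal_gen_def by blast
  define e where "e g = (if g \<in> F then c g else 0) + (if g \<in> G then d g else 0)" for g
  have ex: "(\<Sum>g\<in>H. p g * g) = (\<Sum>g\<in>F \<union> G. (if g \<in> H then p g else 0) * g)"
    if "H \<subseteq> F \<union> G" for H p
  proof -
    have "(\<Sum>g\<in>F \<union> G. (if g \<in> H then p g else 0) * g) = (\<Sum>g\<in>H. (if g \<in> H then p g else 0) * g)"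
      by (rule sum.mono_neutral_right) (use F G that in auto)
    also have "\<dots> = (\<Sum>g\<in>H. p g * g)" by (rule sum.cong) auto
    finally show ?thesis by simp
  qed
  have "x = (\<Sum>g\<in>F \<union> G. (if g \<in> F then c g else 0) * g)"
    using ex[of F c] F(3) by simp
  moreover have "y = (\<Sum>g\<in>F \<union> G. (if g \<in> G then d g else 0) * g)"
    using ex[of G d] G(3) by simp
  ultimately have "x + y = (\<Sum>g\<in>F \<union> G. e g * g)"
    by (simp add: e_def sum.distrib distrib_right)
  then show ?thesis unfolding ideal_gen_def using F G
    by (intro CollectI exI[of _ "F \<union> G"] exI[of _ e] conjI) auto
qed

lemma ideal_gen_mult:
  assumes "x \<in> ideal_gen S" shows "c * x \<in> ideal_gen S"
proof -
  obtain F d where F: "finite F" "F \<subseteq> S" "x = (\<Sum>g\<in>F. d g * g)" using assms unfolding ideal_gen_def by blast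
  have "c * x = (\<Sum>g\<in>F. (c * d g) * g)" using F by (simp add: sum_distrib_left mult.assoc)
  then show ?thesis unfolding ideal_gen_def using F
    by (intro CollectI exI[of _ F] exI[of _ "\<lambda>g. c * d g"] conjI) auto
qed

lemma ideal_gen_is_ideal: "is_ideal (ideal_gen S)"
  unfolding is_ideal_def using ideal_gen_zero ideal_gen_add ideal_gen_mult by blast

lemma ideal_gen_base: "x \<in> S \<Longrightarrow> x \<in> ideal_gen S"
  unfolding ideal_gen_def by (rule CollectI, rule exI[of _ "{x}"], rule exI[of _ "\<lambda>_. 1"]) auto

lemma is_idealD:
  assumes "is_ideal I"
  shows "0 \<in> I" "x \<in> I \<Longrightarrow> y \<in> I \<Longrightarrow> x + y \<in> I" "x \<in> I \<Longrightarrow> c * x \<in> I"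
  using assms unfolding is_ideal_def by auto

lemma ideal_mult_right: "is_ideal I \<Longrightarrow> x \<in> I \<Longrightarrow> x * c \<in> I"
  by (metis is_idealD(3) mult.commute)

lemma ideal_uminus: "is_ideal I \<Longrightarrow> x \<in> I \<Longrightarrow> - x \<in> I"
  using is_idealD(3)[of I x "-1"] by simp

lemma ideal_diff: "is_ideal I \<Longrightarrow> x \<in> I \<Longrightarrow> y \<in> I \<Longrightarrow> x - y \<in> I"
  using is_idealD(2)[OF _ _ ideal_uminus] by (metis diff_conv_add_uminus)

lemma ideal_sum: "is_ideal I \<Longrightarrow> (\<And>x. x \<in> A \<Longrightarrow> f x \<in> I) \<Longrightarrow> sum f A \<in> I"
  by (induction A rule: infinite_finite_induct) (auto intro: is_idealD)

lemma ideal_gen_least: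
  assumes "is_ideal I" "S \<subseteq> I" shows "ideal_gen S \<subseteq> I"
proof
  fix x assume "x \<in> ideal_gen S"
  then obtain F c where F: "finite F" "F \<subseteq> S" "x = (\<Sum>g\<in>F. c g * g)" unfolding ideal_gen_def by blast
  show "x \<in> I" unfolding F(3) by (rule ideal_sum[OF assms(1)]) (use F assms in \<open>auto intro: is_idealD\<close>)
qed

lemma ideal_gen_mono: "S \<subseteq> T \<Longrightarrow> ideal_gen S \<subseteq> ideal_gen T"
  by (meson ideal_gen_base ideal_gen_is_ideal ideal_gen_least subset_iff)

lemma ideal_gen_idem: "is_ideal I \<Longrightarrow> ideal_gen I = I"
  by (simp add: ideal_gen_base ideal_gen_least subset_antisym subsetI)

lemma ideal_gen_sub: "x \<in> ideal_gen S \<Longrightarrow> y \<in> ideal_gen S \<Longrightarrow> x - y \<in> ideal_gen S"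
  using ideal_diff ideal_gen_is_ideal by blast

lemma ideal_gen_sum: "(\<And>x. x \<in> A \<Longrightarrow> f x \<in> ideal_gen S) \<Longrightarrow> sum f A \<in> ideal_gen S"
  using ideal_sum ideal_gen_is_ideal by blast

lemma ideal_gen_image_lessThan:
  "ideal_gen (f ` {..<(q::nat)}) = {x. \<exists>h. x = (\<Sum>m<q. f m * h m)}"
proof
  let ?I = "{x. \<exists>h. x = (\<Sum>m<q. f m * h m)}"
  have "is_ideal ?I" unfolding is_ideal_def
  proof (intro conjI ballI allI)
    show "0 \<in> ?I" by (rule CollectI, rule exI[of _ "\<lambda>_. 0"]) simp
  next
    fix x y assume "x \<in> ?I" "y \<in> ?I"
    then obtain h k where "x = (\<Sum>m<q. f m * h m)" "y = (\<Sum>m<q. f m * k m)" by blast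
    then have "x + y = (\<Sum>m<q. f m * (h m + k m))" by (simp add: sum.distrib distrib_left)
    then show "x + y \<in> ?I" by (intro CollectI exI)
  next
    fix x c assume "x \<in> ?I"
    then obtain h where "x = (\<Sum>m<q. f m * h m)" by blast
    then have "c * x = (\<Sum>m<q. f m * (c * h m))" by (simp add: sum_distrib_left algebra_simps)
    then show "c * x \<in> ?I" by (intro CollectI exI)
  qed
  moreover have "f ` {..<q} \<subseteq> ?I"
  proof
    fix x assume "x \<in> f ` {..<q}"
    then obtain j where j: "j < q" "x = f j" by blast
    have "(\<Sum>m<q. f m * (if m = j then 1 else 0)) = (\<Sum>m<q. if m = j then f j else 0)"
      by (rule sum.cong) auto
    also have "\<dots> = f j" using j by (subst sum.delta) auto
    finally have "x = (\<Sum>m<q. f m * (if m = j then 1 else 0))" using j by simp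
    then show "x \<in> ?I" by (intro CollectI exI)
  qed
  ultimately show "ideal_gen (f ` {..<q}) \<subseteq> ?I" by (rule ideal_gen_least)
next
  show "{x. \<exists>h. x = (\<Sum>m<q. f m * h m)} \<subseteq> ideal_gen (f ` {..<q})"
  proof
    fix x assume "x \<in> {x. \<exists>h. x = (\<Sum>m<q. f m * h m)}"
    then obtain h where h: "x = (\<Sum>m<q. f m * h m)" by blast
    show "x \<in> ideal_gen (f ` {..<q})" unfolding h
      by (rule ideal_gen_sum) (metis ideal_gen_base ideal_gen_mult image_eqI lessThan_iff mult.commute)
  qed
qed

section \<open>Determinants\<close>

definition JM :: "nat \<Rightarrow> (nat \<Rightarrow> nat \<Rightarrow> 'b::comm_ring_1) \<Rightarrow> 'b mat" where
  "JM r X = mat r r (\<lambda>(i,j). X i j)"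

definition upd :: "(nat \<Rightarrow> nat \<Rightarrow> 'b) \<Rightarrow> nat \<Rightarrow> (nat \<Rightarrow> 'b) \<Rightarrow> nat \<Rightarrow> nat \<Rightarrow> 'b" where
  "upd X p u = (\<lambda>i k. if k = p then u i else X i k)"

lemma JM_carrier: "JM r X \<in> carrier_mat r r"
  unfolding JM_def by simp

lemma det_n_JM: "det_n r X = det (JM r X)"
  unfolding det_n_def det_def JM_def
  by (auto simp: atLeast0LessThan permutes_in_image intro!: sum.cong prod.cong)

lemma det_n_cong:
  assumes "\<And>i k. i < r \<Longrightarrow> k < r \<Longrightarrow> X i k = Y i k" shows "det_n r X = det_n r Y"
  unfolding det_n_def
proof (rule sum.cong[OF refl])
  fix q assume "q \<in> {q. q permutes {..<r}}"
  then have q: "q permutes {..<r}" by simp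
  have "i < r \<Longrightarrow> q i < r" for i using permutes_in_image[OF q, of i] by simp
  then have "(\<Prod>i<r. X i (q i)) = (\<Prod>i<r. Y i (q i))" using assms by (intro prod.cong) auto
  then show "of_int (sign q) * (\<Prod>i<r. X i (q i)) = of_int (sign q) * (\<Prod>i<r. Y i (q i))" by simp
qed

lemma cof_indep:
  assumes "p < r"
  shows "cofactor (JM r (upd X p u)) l p = cofactor (JM r X) l p"
proof -
  have "mat_delete (JM r (upd X p u)) l p = mat_delete (JM r X) l p"
    by (rule eq_matI) (auto simp: mat_delete_def JM_def upd_def)
  then show ?thesis unfolding cofactor_def by simp
qed

lemma det_upd:
  assumes "p < r"
  shows "det_n r (upd X p u) = (\<Sum>l<r. u l * cofactor (JM r X) l p)"
proof -
  have "det_n r (upd X p u) = (\<Sum>l<r. JM r (upd X p u) $$ (l,p) * cofactor (JM r (upd X p u)) l p)"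
    unfolding det_n_JM by (rule laplace_expansion_column[OF JM_carrier assms])
  also have "\<dots> = (\<Sum>l<r. u l * cofactor (JM r X) l p)"
    using assms by (intro sum.cong refl) (simp only: cof_indep[OF assms], simp add: JM_def upd_def)
  finally show ?thesis .
qed

lemma upd_self: "upd X p (\<lambda>i. X i p) = X"
  unfolding upd_def by (auto simp: fun_eq_iff)

lemma koszul_identity:
  fixes \<alpha> :: "nat \<Rightarrow> 'b::comm_ring_1"
  assumes p: "p < r" and i: "i < r" and j: "j < r"
  shows "\<alpha> i * cofactor (JM r X) j p - \<alpha> j * cofactor (JM r X) i p
         \<in> ideal_gen ((\<lambda>l. \<Sum>m<r. \<alpha> m * X m l) ` ({..<r} - {p}))"
proof -
  define e where "e = (\<lambda>m. if m = j then (1::'b) else 0)"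
  define Y where "Y = upd X p e"
  define Z where "Z = JM r Y"
  have Zc: "Z \<in> carrier_mat r r" unfolding Z_def by (rule JM_carrier)
  have "(\<Sum>l<r. e l * cofactor (JM r X) l p) = (\<Sum>l<r. if l = j then cofactor (JM r X) l p else 0)"
    unfolding e_def by (rule sum.cong) auto
  also have "\<dots> = cofactor (JM r X) j p" using j by simp
  finally have detZ: "det Z = cofactor (JM r X) j p"
    using det_upd[OF p, of X e] unfolding Z_def Y_def det_n_JM[symmetric] by simp
  have cofZ: "cofactor Z i p = cofactor (JM r X) i p"
    unfolding Z_def Y_def by (rule cof_indep[OF p])
  have row: "(\<Sum>k<r. Y m k * cofactor Z i k) = (if m = i then det Z else 0)" if m: "m < r" for m
  proof -
    have "(Z * adj_mat Z) $$ (m, i) = (det Z \<cdot>\<^sub>m 1\<^sub>m r) $$ (m, i)"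
      using adj_mat(2)[OF Zc] by simp
    moreover have "(Z * adj_mat Z) $$ (m, i) = (\<Sum>k<r. Y m k * cofactor Z i k)"
    proof -
      have dims: "dim_row Z = r" "dim_col Z = r" "dim_row (adj_mat Z) = r" "dim_col (adj_mat Z) = r"
        using Zc adj_mat(1)[OF Zc] by auto
      have "(Z * adj_mat Z) $$ (m, i) = (\<Sum>k\<in>{0..<r}. Z $$ (m,k) * adj_mat Z $$ (k,i))"
        using m i dims by (simp add: index_mult_mat scalar_prod_def)
      also have "\<dots> = (\<Sum>k<r. Y m k * cofactor Z i k)"
        unfolding atLeast0LessThan
      proof (rule sum.cong[OF refl])
        fix k assume k: "k \<in> {..<r}"
        have "Z $$ (m,k) = Y m k" using m k unfolding Z_def JM_def by simp
        moreover have "adj_mat Z $$ (k,i) = cofactor Z i k" using k i dims unfolding adj_mat_def by simp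
        ultimately show "Z $$ (m,k) * adj_mat Z $$ (k,i) = Y m k * cofactor Z i k" by simp
      qed
      finally show ?thesis .
    qed
    ultimately show ?thesis using m i by simp
  qed
  have "(\<Sum>m<r. \<alpha> m * (if m = i then det Z else 0)) = (\<Sum>m<r. if m = i then \<alpha> m * det Z else 0)"
    by (rule sum.cong) auto
  then have "\<alpha> i * det Z = (\<Sum>m<r. \<alpha> m * (if m = i then det Z else 0))"
    using i by simp
  also have "\<dots> = (\<Sum>m<r. \<alpha> m * (\<Sum>k<r. Y m k * cofactor Z i k))"
    using row by (intro sum.cong) auto
  also have "\<dots> = (\<Sum>k<r. (\<Sum>m<r. \<alpha> m * Y m k) * cofactor Z i k)"
  proof -
    have "(\<Sum>m<r. \<alpha> m * (\<Sum>k<r. Y m k * cofactor Z i k)) = (\<Sum>m<r. \<Sum>k<r. \<alpha> m * Y m k * cofactor Z i k)"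
      by (simp add: sum_distrib_left mult.assoc)
    also have "\<dots> = (\<Sum>k<r. \<Sum>m<r. \<alpha> m * Y m k * cofactor Z i k)"
      by (rule sum.swap)
    also have "\<dots> = (\<Sum>k<r. (\<Sum>m<r. \<alpha> m * Y m k) * cofactor Z i k)"
      by (simp add: sum_distrib_right)
    finally show ?thesis .
  qed
  also have "\<dots> = (\<Sum>m<r. \<alpha> m * Y m p) * cofactor Z i p
       + (\<Sum>k\<in>{..<r} - {p}. (\<Sum>m<r. \<alpha> m * Y m k) * cofactor Z i k)"
    using p by (intro sum.remove) auto
  also have "(\<Sum>m<r. \<alpha> m * Y m p) = \<alpha> j"
  proof -
    have "(\<Sum>m<r. \<alpha> m * Y m p) = (\<Sum>m<r. if m = j then \<alpha> m else 0)"
      unfolding Y_def upd_def e_def by (rule sum.cong) auto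
    then show ?thesis using j by simp
  qed
  also have "(\<Sum>k\<in>{..<r} - {p}. (\<Sum>m<r. \<alpha> m * Y m k) * cofactor Z i k)
      = (\<Sum>k\<in>{..<r} - {p}. (\<Sum>m<r. \<alpha> m * X m k) * cofactor Z i k)"
    unfolding Y_def upd_def by (intro sum.cong) auto
  finally have eq: "\<alpha> i * det Z - \<alpha> j * cofactor Z i p
      = (\<Sum>k\<in>{..<r} - {p}. (\<Sum>m<r. \<alpha> m * X m k) * cofactor Z i k)"
    by (metis add_diff_cancel_left')
  show ?thesis
    unfolding detZ[symmetric] cofZ[symmetric] eq
  proof (rule ideal_gen_sum)
    fix k assume "k \<in> {..<r} - {p}"
    then have "(\<Sum>m<r. \<alpha> m * X m k) \<in> ideal_gen ((\<lambda>l. \<Sum>m<r. \<alpha> m * X m l) ` ({..<r} - {p}))"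
      by (intro ideal_gen_base) blast
    then show "(\<Sum>m<r. \<alpha> m * X m k) * cofactor Z i k \<in> ideal_gen ((\<lambda>l. \<Sum>m<r. \<alpha> m * X m l) ` ({..<r} - {p}))"
      by (rule ideal_mult_right[OF ideal_gen_is_ideal])
  qed
qed


section \<open>Syzygies of a regular sequence are Koszul\<close>

definition regseq :: "(nat \<Rightarrow> 'b::comm_ring_1) \<Rightarrow> nat \<Rightarrow> bool" where
  "regseq \<alpha> r \<longleftrightarrow> (\<forall>i<r. \<forall>x. \<alpha> i * x \<in> ideal_gen (\<alpha> ` {..<i}) \<longrightarrow> x \<in> ideal_gen (\<alpha> ` {..<i}))"

lemma koszul_gen:
  fixes \<alpha> \<gamma> :: "nat \<Rightarrow> 'b::comm_ring_1"
  assumes J: "is_ideal J"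
    and K: "\<And>i j. i < r \<Longrightarrow> j < r \<Longrightarrow> \<alpha> i * \<gamma> j - \<alpha> j * \<gamma> i \<in> J"
    and reg: "regseq \<alpha> r"
  shows "q \<le> r \<Longrightarrow> (\<Sum>m<q. \<alpha> m * u m) = 0 \<Longrightarrow> (\<Sum>l<q. u l * \<gamma> l) \<in> J"
proof (induction q arbitrary: u)
  case 0
  then show ?case using J by (simp add: is_idealD)
next
  case (Suc q)
  have q: "q < r" using Suc.prems by simp
  have "\<alpha> q * u q = - (\<Sum>m<q. \<alpha> m * u m)" using Suc.prems(2) by (simp add: add_eq_0_iff2 add.commute)
  also have "\<dots> = (\<Sum>m<q. \<alpha> m * (- u m))" by (simp add: sum_negf)
  finally have eq: "\<alpha> q * u q = (\<Sum>m<q. \<alpha> m * (- u m))" .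
  have "\<alpha> q * u q \<in> ideal_gen (\<alpha> ` {..<q})" unfolding ideal_gen_image_lessThan
    by (rule CollectI, rule exI[of _ "\<lambda>m. - u m"], rule eq)
  then have "u q \<in> ideal_gen (\<alpha> ` {..<q})" using reg q unfolding regseq_def by blast
  then obtain h where h: "u q = (\<Sum>m<q. \<alpha> m * h m)" unfolding ideal_gen_image_lessThan by blast
  define u' where "u' m = u m + \<alpha> q * h m" for m
  have "(\<Sum>m<q. \<alpha> m * u' m) = (\<Sum>m<q. \<alpha> m * u m) + \<alpha> q * (\<Sum>m<q. \<alpha> m * h m)"
    unfolding u'_def by (simp add: distrib_left sum.distrib sum_distrib_left algebra_simps)
  also have "\<dots> = 0" using Suc.prems(2) h by (simp add: algebra_simps)
  finally have IH: "(\<Sum>l<q. u' l * \<gamma> l) \<in> J" using Suc.IH[of u'] Suc.prems by simp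
  have T: "(\<Sum>l<Suc q. u l * \<gamma> l) = (\<Sum>l<q. u' l * \<gamma> l) - (\<Sum>l<q. h l * (\<alpha> q * \<gamma> l - \<alpha> l * \<gamma> q))"
  proof -
    have "(\<Sum>l<q. u' l * \<gamma> l) - (\<Sum>l<q. h l * (\<alpha> q * \<gamma> l - \<alpha> l * \<gamma> q))
        = (\<Sum>l<q. u l * \<gamma> l + \<gamma> q * (\<alpha> l * h l))"
      unfolding u'_def sum_subtractf[symmetric] by (rule sum.cong) (auto simp: algebra_simps)
    also have "\<dots> = (\<Sum>l<q. u l * \<gamma> l) + \<gamma> q * u q"
      unfolding h by (simp add: sum.distrib sum_distrib_left)
    finally show ?thesis by (simp add: mult.commute)
  qed
  have "(\<Sum>l<q. h l * (\<alpha> q * \<gamma> l - \<alpha> l * \<gamma> q)) \<in> J"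
  proof (rule ideal_sum[OF J])
    fix l assume "l \<in> {..<q}"
    then have "\<alpha> q * \<gamma> l - \<alpha> l * \<gamma> q \<in> J" using K q by simp
    then show "h l * (\<alpha> q * \<gamma> l - \<alpha> l * \<gamma> q) \<in> J" by (rule is_idealD(3)[OF J])
  qed
  then show ?case unfolding T using IH J by (simp add: ideal_diff)
qed

section \<open>Regularity in the polynomial ring\<close>

lemma lookup_const_mult:
  "Poly_Mapping.lookup (const c * p) k = (c::'a::comm_ring_1) * Poly_Mapping.lookup p k"
  unfolding const_def mult_map_scale_conv_mult[symmetric] by transfer (simp add: when_def)

lemma regseq_poly:
  fixes a :: "nat \<Rightarrow> 'a::comm_ring_1"
  assumes "regseq a r"
  shows "regseq (\<lambda>i. const (a i) :: ('v, 'a) mpoly) r"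
  unfolding regseq_def
proof (intro allI impI)
  fix i and x :: "('v, 'a) mpoly"
  assume i: "i < r" and mem: "const (a i) * x \<in> ideal_gen ((\<lambda>i. const (a i)) ` {..<i})"
  obtain h where h: "const (a i) * x = (\<Sum>m<i. const (a m) * h m)"
    using mem unfolding ideal_gen_image_lessThan by blast
  have "\<forall>k. \<exists>H. Poly_Mapping.lookup x k = (\<Sum>m<i. a m * H m)"
  proof
    fix k
    show "\<exists>H. Poly_Mapping.lookup x k = (\<Sum>m<i. a m * H m)"
  proof -
    have "a i * Poly_Mapping.lookup x k = (\<Sum>m<i. a m * Poly_Mapping.lookup (h m) k)"
      using arg_cong[OF h, of "\<lambda>p. Poly_Mapping.lookup p k"] by (simp add: lookup_sum lookup_const_mult)
    then have "a i * Poly_Mapping.lookup x k \<in> ideal_gen (a ` {..<i})"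
      unfolding ideal_gen_image_lessThan by (intro CollectI exI[of _ "\<lambda>m. Poly_Mapping.lookup (h m) k"])
    then have "Poly_Mapping.lookup x k \<in> ideal_gen (a ` {..<i})"
      using assms i unfolding regseq_def by blast
    then show ?thesis unfolding ideal_gen_image_lessThan by blast
  qed
  qed
  from choice[OF this] obtain H where H0: "\<forall>k. Poly_Mapping.lookup x k = (\<Sum>m<i. a m * H k m)" by blast
  then have H: "\<And>k. Poly_Mapping.lookup x k = (\<Sum>m<i. a m * H k m)" by blast
  define h' where "h' m = (\<Sum>k\<in>Poly_Mapping.keys x. Poly_Mapping.single k (H k m))" for m
  have "x = (\<Sum>m<i. const (a m) * h' m)"
  proof (rule poly_mapping_eqI)
    fix \<nu>
    have "Poly_Mapping.lookup (\<Sum>m<i. const (a m) * h' m) \<nu>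
        = (\<Sum>m<i. a m * (\<Sum>k\<in>Poly_Mapping.keys x. Poly_Mapping.lookup (Poly_Mapping.single k (H k m)) \<nu>))"
      unfolding h'_def by (simp add: lookup_sum lookup_const_mult)
    also have "\<dots> = (\<Sum>m<i. a m * (if \<nu> \<in> Poly_Mapping.keys x then H \<nu> m else 0))"
    proof (rule sum.cong[OF refl])
      fix m
      have "(\<Sum>k\<in>Poly_Mapping.keys x. Poly_Mapping.lookup (Poly_Mapping.single k (H k m)) \<nu>)
          = (\<Sum>k\<in>Poly_Mapping.keys x. if k = \<nu> then H \<nu> m else 0)"
        by (rule sum.cong) (auto simp: lookup_single when_def)
      also have "\<dots> = (if \<nu> \<in> Poly_Mapping.keys x then H \<nu> m else 0)"
        by (simp add: sum.delta')
      finally show "a m * (\<Sum>k\<in>Poly_Mapping.keys x. Poly_Mapping.lookup (Poly_Mapping.single k (H k m)) \<nu>)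
          = a m * (if \<nu> \<in> Poly_Mapping.keys x then H \<nu> m else 0)" by simp
    qed
    also have "\<dots> = Poly_Mapping.lookup x \<nu>"
    proof (cases "\<nu> \<in> Poly_Mapping.keys x")
      case True then show ?thesis using H[of \<nu>] by simp
    next
      case False then show ?thesis by (simp add: in_keys_iff)
    qed
    finally show "Poly_Mapping.lookup x \<nu> = Poly_Mapping.lookup (\<Sum>m<i. const (a m) * h' m) \<nu>" by simp
  qed
  then show "x \<in> ideal_gen ((\<lambda>i. const (a i)) ` {..<i})" unfolding ideal_gen_image_lessThan by blast
qed


definition atv :: "(nat \<Rightarrow> 'b::comm_ring_1) \<Rightarrow> nat \<Rightarrow> (nat \<Rightarrow> nat \<Rightarrow> 'b) \<Rightarrow> nat \<Rightarrow> 'b" where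
  "atv \<alpha> r M k = (\<Sum>i<r. \<alpha> i * M i k)"

lemma ideal_gen_union_mono1: "x \<in> A \<Longrightarrow> x \<in> ideal_gen (A \<union> B)"
  by (simp add: ideal_gen_base)

lemma main_minors:
  fixes \<alpha> :: "nat \<Rightarrow> 'b::comm_ring_1"
  assumes reg: "regseq \<alpha> r"
    and cols: "\<forall>k<n'. atv \<alpha> r M' k \<in> ideal_gen (atv \<alpha> r M ` {..<n})"
  shows "minors_ideal r M' n' \<subseteq> ideal_gen (ideal_gen (atv \<alpha> r M ` {..<n}) \<union> minors_ideal r M n)"
proof -
  define AI where "AI = ideal_gen (atv \<alpha> r M ` {..<n})"
  define T where "T = ideal_gen (AI \<union> minors_ideal r M n)"
  have Tid: "is_ideal T" unfolding T_def by (rule ideal_gen_is_ideal)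
  have AIT: "AI \<subseteq> T" unfolding T_def by (auto intro: ideal_gen_base)
  have MT: "minors_ideal r M n \<subseteq> T" unfolding T_def by (auto intro: ideal_gen_base)
  have AIid: "is_ideal AI" unfolding AI_def by (rule ideal_gen_is_ideal)
  have claim: "\<forall>p X. p + d = r \<longrightarrow> (\<forall>k<r. atv \<alpha> r X k \<in> AI) \<longrightarrow>
      (\<forall>k<p. \<exists>j<n. \<forall>i<r. X i k = M i j) \<longrightarrow> det_n r X \<in> T" for d
  proof (induction d)
    case 0
    show ?case
    proof (intro allI impI)
      fix p X assume p: "p + 0 = r" and cX: "\<forall>k<p. \<exists>j<n. \<forall>i<r. X i k = M i j"
      then have "\<forall>k. \<exists>j. k < r \<longrightarrow> j < n \<and> (\<forall>i<r. X i k = M i j)" by auto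
      from choice[OF this] obtain c where c0: "\<forall>k. k < r \<longrightarrow> c k < n \<and> (\<forall>i<r. X i k = M i (c k))" by blast
      then have c: "\<And>k. k < r \<Longrightarrow> c k < n \<and> (\<forall>i<r. X i k = M i (c k))" by blast
      have "det_n r X = det_n r (\<lambda>i k. M i (c k))" by (rule det_n_cong) (use c in auto)
      moreover have "det_n r (\<lambda>i k. M i (c k)) \<in> minors_ideal r M n"
        unfolding minors_ideal_def by (rule ideal_gen_base) (use c in auto)
      ultimately show "det_n r X \<in> T" using MT by auto
    qed
  next
    case (Suc d)
    show ?case
    proof (intro allI impI)
      fix p X assume p: "p + Suc d = r" and aX: "\<forall>k<r. atv \<alpha> r X k \<in> AI"
        and cX: "\<forall>k<p. \<exists>j<n. \<forall>i<r. X i k = M i j"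
      have pr: "p < r" using p by simp
      obtain h where h: "atv \<alpha> r X p = (\<Sum>j<n. atv \<alpha> r M j * h j)"
        using aX pr unfolding AI_def ideal_gen_image_lessThan by blast
      define v where "v i = (\<Sum>j<n. h j * M i j)" for i
      define z where "z i = X i p - v i" for i
      define cof where "cof l = cofactor (JM r X) l p" for l
      have zsyz: "(\<Sum>i<r. \<alpha> i * z i) = 0"
      proof -
        have "(\<Sum>i<r. \<alpha> i * v i) = (\<Sum>i<r. \<Sum>j<n. h j * (\<alpha> i * M i j))"
          unfolding v_def by (simp add: sum_distrib_left algebra_simps)
        also have "\<dots> = (\<Sum>j<n. \<Sum>i<r. h j * (\<alpha> i * M i j))" by (rule sum.swap)
        also have "\<dots> = (\<Sum>j<n. atv \<alpha> r M j * h j)"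
          by (simp add: atv_def sum_distrib_left sum_distrib_right mult_ac)
        also have "\<dots> = atv \<alpha> r X p" using h by simp
        finally show ?thesis unfolding z_def atv_def by (simp add: right_diff_distrib sum_subtractf)
      qed
      have "det_n r X = det_n r (upd X p (\<lambda>i. X i p))" by (simp add: upd_self)
      also have "\<dots> = (\<Sum>l<r. X l p * cof l)" unfolding cof_def by (rule det_upd[OF pr])
      also have "\<dots> = (\<Sum>l<r. v l * cof l) + (\<Sum>l<r. z l * cof l)"
        unfolding z_def by (simp add: left_diff_distrib sum_subtractf)
      finally have dX: "det_n r X = (\<Sum>l<r. v l * cof l) + (\<Sum>l<r. z l * cof l)" .
      have vpart: "(\<Sum>l<r. v l * cof l) \<in> T"
      proof -
        have "(\<Sum>l<r. v l * cof l) = (\<Sum>l<r. \<Sum>j<n. h j * (M l j * cof l))"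
          unfolding v_def by (simp add: sum_distrib_right sum_distrib_left mult_ac)
        also have "\<dots> = (\<Sum>j<n. \<Sum>l<r. h j * (M l j * cof l))" by (rule sum.swap)
        also have "\<dots> = (\<Sum>j<n. h j * det_n r (upd X p (\<lambda>i. M i j)))"
          unfolding cof_def det_upd[OF pr] by (simp add: sum_distrib_left)
        finally have eq: "(\<Sum>l<r. v l * cof l) = (\<Sum>j<n. h j * det_n r (upd X p (\<lambda>i. M i j)))" .
        have "det_n r (upd X p (\<lambda>i. M i j)) \<in> T" if j: "j < n" for j
        proof -
          have a1: "Suc p + d = r" using p by simp
          have a2: "\<forall>k<r. atv \<alpha> r (upd X p (\<lambda>i. M i j)) k \<in> AI"
          proof (intro allI impI)
            fix k assume k: "k < r"
            show "atv \<alpha> r (upd X p (\<lambda>i. M i j)) k \<in> AI"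
            proof (cases "k = p")
              case True
              then have "atv \<alpha> r (upd X p (\<lambda>i. M i j)) k = atv \<alpha> r M j" unfolding atv_def upd_def by simp
              then show ?thesis unfolding AI_def using j by (auto intro: ideal_gen_base)
            next
              case False
              then have "atv \<alpha> r (upd X p (\<lambda>i. M i j)) k = atv \<alpha> r X k" unfolding atv_def upd_def by simp
              then show ?thesis using aX k by simp
            qed
          qed
          have a3: "\<forall>k<Suc p. \<exists>j'<n. \<forall>i<r. upd X p (\<lambda>i. M i j) i k = M i j'"
          proof (intro allI impI)
            fix k assume k: "k < Suc p"
            show "\<exists>j'<n. \<forall>i<r. upd X p (\<lambda>i. M i j) i k = M i j'"
            proof (cases "k = p")
              case True then show ?thesis using j unfolding upd_def by auto
            next
              case False then have "k < p" using k by simp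
              then show ?thesis using cX unfolding upd_def using False by auto
            qed
          qed
          show ?thesis
            by (rule mp[OF mp[OF mp[OF spec[OF spec[OF Suc.IH, of "Suc p"], of "upd X p (\<lambda>i. M i j)"] a1] a2] a3])
        qed
        then show ?thesis unfolding eq by (intro ideal_sum[OF Tid] is_idealD(3)[OF Tid]) auto
      qed
      have zpart: "(\<Sum>l<r. z l * cof l) \<in> T"
      proof -
        define J where "J = ideal_gen ((\<lambda>l. \<Sum>m<r. \<alpha> m * X m l) ` ({..<r} - {p}))"
        have "(\<Sum>l<r. z l * cof l) \<in> J"
          unfolding J_def
          by (rule koszul_gen[OF ideal_gen_is_ideal _ reg order_refl zsyz])
             (unfold cof_def, rule koszul_identity[OF pr])
        moreover have "J \<subseteq> AI" unfolding J_def
          by (rule ideal_gen_least[OF AIid]) (use aX in \<open>auto simp: atv_def\<close>)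
        ultimately show ?thesis using AIT by auto
      qed
      show "det_n r X \<in> T" unfolding dX using vpart zpart Tid by (simp add: is_idealD)
    qed
  qed
  have "minors_ideal r M' n' \<subseteq> T" unfolding minors_ideal_def[of r M' n']
  proof (rule ideal_gen_least[OF Tid], rule subsetI)
    fix x assume "x \<in> {det_n r (\<lambda>i k. M' i (c k)) | c. c ` {..<r} \<subseteq> {..<n'}}"
    then obtain c where x: "x = det_n r (\<lambda>i k. M' i (c k))" and c: "c ` {..<r} \<subseteq> {..<n'}" by blast
    have "\<forall>k<r. atv \<alpha> r (\<lambda>i k. M' i (c k)) k \<in> AI"
      using cols c unfolding AI_def atv_def by auto
    then show "x \<in> T" using claim[of r] x by auto
  qed
  then show ?thesis unfolding T_def AI_def .
qed


lemma ideal_gen_union_gen: "ideal_gen (ideal_gen A \<union> B) = ideal_gen (A \<union> B)"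
proof
  show "ideal_gen (ideal_gen A \<union> B) \<subseteq> ideal_gen (A \<union> B)"
    by (rule ideal_gen_least[OF ideal_gen_is_ideal])
       (use ideal_gen_mono[of A "A \<union> B"] in \<open>auto intro: ideal_gen_base\<close>)
  show "ideal_gen (A \<union> B) \<subseteq> ideal_gen (ideal_gen A \<union> B)"
    by (rule ideal_gen_mono) (auto intro: ideal_gen_base)
qed

lemma ideal_gen_union_ideals:
  assumes P: "is_ideal P" and Q: "is_ideal Q"
  shows "ideal_gen (P \<union> Q) = {p + q |p q. p \<in> P \<and> q \<in> Q}"
proof
  let ?S = "{p + q |p q. p \<in> P \<and> q \<in> Q}"
  have "is_ideal ?S" unfolding is_ideal_def
  proof (intro conjI ballI allI)
    show "0 \<in> ?S" using P Q is_idealD(1) by force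
  next
    fix x y assume "x \<in> ?S" "y \<in> ?S"
    then obtain p q p' q' where "x = p + q" "y = p' + q'" "p \<in> P" "q \<in> Q" "p' \<in> P" "q' \<in> Q" by blast
    moreover have "x + y = (p + p') + (q + q')" using \<open>x = p + q\<close> \<open>y = p' + q'\<close> by (simp add: algebra_simps)
    moreover have "p + p' \<in> P" "q + q' \<in> Q" using P Q is_idealD(2) \<open>p \<in> P\<close> \<open>p' \<in> P\<close> \<open>q \<in> Q\<close> \<open>q' \<in> Q\<close> by blast+
    ultimately show "x + y \<in> ?S" by blast
  next
    fix x c assume "x \<in> ?S"
    then obtain p q where "x = p + q" "p \<in> P" "q \<in> Q" by blast
    moreover have "c * x = c * p + c * q" using \<open>x = p + q\<close> by (simp add: algebra_simps)
    moreover have "c * p \<in> P" "c * q \<in> Q" using P Q is_idealD(3) \<open>p \<in> P\<close> \<open>q \<in> Q\<close> by blast+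
    ultimately show "c * x \<in> ?S" by blast
  qed
  moreover have "P \<union> Q \<subseteq> ?S"
  proof
    fix x assume "x \<in> P \<union> Q"
    then show "x \<in> ?S"
    proof
      assume "x \<in> P" then show ?thesis using Q is_idealD(1)[OF Q] by (intro CollectI exI[of _ x] exI[of _ 0]) auto
    next
      assume "x \<in> Q" then show ?thesis using is_idealD(1)[OF P] by (intro CollectI exI[of _ 0] exI[of _ x]) auto
    qed
  qed
  ultimately show "ideal_gen (P \<union> Q) \<subseteq> ?S" by (rule ideal_gen_least)
  show "?S \<subseteq> ideal_gen (P \<union> Q)"
  proof
    fix x assume "x \<in> ?S"
    then obtain p q where "x = p + q" "p \<in> P" "q \<in> Q" by blast
    have "p \<in> ideal_gen (P \<union> Q)" "q \<in> ideal_gen (P \<union> Q)"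
      using \<open>p \<in> P\<close> \<open>q \<in> Q\<close> by (auto intro: ideal_gen_base)
    then show "x \<in> ideal_gen (P \<union> Q)" unfolding \<open>x = p + q\<close> by (rule ideal_gen_add)
  qed
qed

lemma modular_law:
  assumes P: "is_ideal P" and Q: "is_ideal Q" and A: "is_ideal A" and PA: "P \<subseteq> A"
  shows "ideal_gen (P \<union> Q) \<inter> A = ideal_gen (P \<union> (Q \<inter> A))"
proof
  show "ideal_gen (P \<union> Q) \<inter> A \<subseteq> ideal_gen (P \<union> (Q \<inter> A))"
  proof
    fix x assume x: "x \<in> ideal_gen (P \<union> Q) \<inter> A"
    then obtain p q where pq: "x = p + q" "p \<in> P" "q \<in> Q" unfolding ideal_gen_union_ideals[OF P Q] by blast
    have "q = x - p" using pq by simp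
    then have "q \<in> A" using x pq PA A ideal_diff by blast
    then have "q \<in> ideal_gen (P \<union> (Q \<inter> A))" "p \<in> ideal_gen (P \<union> (Q \<inter> A))"
      using pq by (auto intro: ideal_gen_base)
    then show "x \<in> ideal_gen (P \<union> (Q \<inter> A))" using pq ideal_gen_add by blast
  qed
  show "ideal_gen (P \<union> (Q \<inter> A)) \<subseteq> ideal_gen (P \<union> Q) \<inter> A"
    using ideal_gen_mono[of "P \<union> (Q \<inter> A)" "P \<union> Q"] ideal_gen_least[OF A, of "P \<union> (Q \<inter> A)"] PA by auto
qed

lemma a_times_atv: "a_times a r M = atv (\<lambda>i. const (a i)) r M"
  by (auto simp: fun_eq_iff a_times_def atv_def)

lemma a_ideal_atv: "a_ideal a r M n = ideal_gen (atv (\<lambda>i. const (a i)) r M ` {..<n})"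
  unfolding a_ideal_def a_times_atv ..

lemma a_ideal_sub: "a_ideal a r M n \<subseteq> ideal_a a r"
  unfolding a_ideal_def ideal_a_def
proof (rule ideal_gen_least[OF ideal_gen_is_ideal], rule subsetI)
  fix x assume "x \<in> a_times a r M ` {..<n}"
  then obtain k where x: "x = a_times a r M k" by blast
  show "x \<in> ideal_gen ((\<lambda>i. const (a i)) ` {..<r})" unfolding x a_times_def
    by (rule ideal_gen_sum, rule ideal_mult_right[OF ideal_gen_is_ideal], rule ideal_gen_base) auto
qed

lemma step_minors:
  assumes "jd_step a r M n M' n'"
  shows "minors_ideal r M n \<subseteq> minors_ideal r M' n'"
  unfolding minors_ideal_def
proof (rule ideal_gen_mono, rule subsetI)
  have nn: "n \<le> n'" and eqM: "\<And>i k. i < r \<Longrightarrow> k < n \<Longrightarrow> M' i k = M i k"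
    using assms unfolding jd_step_def by auto
  fix x assume "x \<in> {det_n r (\<lambda>i k. M i (c k)) |c. c ` {..<r} \<subseteq> {..<n}}"
  then obtain c where x: "x = det_n r (\<lambda>i k. M i (c k))" and c: "c ` {..<r} \<subseteq> {..<n}" by blast
  have "x = det_n r (\<lambda>i k. M' i (c k))" unfolding x by (rule det_n_cong) (use c eqM in auto)
  moreover have "c ` {..<r} \<subseteq> {..<n'}" using c nn by auto
  ultimately show "x \<in> {det_n r (\<lambda>i k. M' i (c k)) |c. c ` {..<r} \<subseteq> {..<n'}}" by blast
qed

lemma step_a_ideal:
  assumes "jd_step a r M n M' n'"
  shows "a_ideal a r M' n' = ideal_gen (a_ideal a r M n \<union> (minors_ideal r M n \<inter> ideal_a a r))"
proof -
  have nn: "n \<le> n'" and eqM: "\<And>i k. i < r \<Longrightarrow> k < n \<Longrightarrow> M' i k = M i k"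
    and eq: "ideal_gen (a_ideal a r M n \<union> (minors_ideal r M n \<inter> ideal_a a r))
       = ideal_gen (a_ideal a r M n \<union> a_times a r M' ` {n..<n'})"
    using assms unfolding jd_step_def by auto
  have "a_times a r M' ` {..<n} = a_times a r M ` {..<n}"
    unfolding a_times_def using eqM by (intro image_cong refl sum.cong) auto
  moreover have "{..<n'} = {..<n} \<union> {n..<n'}" using nn by auto
  ultimately have "a_times a r M' ` {..<n'} = a_times a r M ` {..<n} \<union> a_times a r M' ` {n..<n'}"
    by (simp add: image_Un)
  then have "a_ideal a r M' n' = ideal_gen (a_ideal a r M n \<union> a_times a r M' ` {n..<n'})"
    unfolding a_ideal_def[of a r M' n'] a_ideal_def[of a r M n] ideal_gen_union_gen by simp
  then show ?thesis using eq by simp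
qed

lemma iterated_pos: "iterated_jd \<phi> s a r i B n \<Longrightarrow> i \<ge> 1"
  by (induction rule: iterated_jd.induct) auto

lemma iterated_L:
  "iterated_jd \<phi> s a r i B n \<Longrightarrow>
     L_ideal \<phi> s \<subseteq> a_ideal a r B n \<and> a_ideal a r B n \<subseteq> ideal_gen (L_ideal \<phi> s \<union> minors_ideal r B n)"
proof (induction rule: iterated_jd.induct)
  case (first B)
  then have "L_ideal \<phi> s = a_ideal a r B s"
    unfolding L_ideal_def a_ideal_def jd_first_def by (intro arg_cong[where f=ideal_gen] image_cong) auto
  then show ?case by (auto intro: ideal_gen_base)
next
  case (step i B n B' n')
  have eq: "a_ideal a r B' n' = ideal_gen (a_ideal a r B n \<union> (minors_ideal r B n \<inter> ideal_a a r))"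
    by (rule step_a_ideal[OF step.hyps(2)])
  have mm: "minors_ideal r B n \<subseteq> minors_ideal r B' n'" by (rule step_minors[OF step.hyps(2)])
  have "a_ideal a r B n \<subseteq> a_ideal a r B' n'" unfolding eq by (auto intro: ideal_gen_base)
  moreover have "a_ideal a r B' n' \<subseteq> ideal_gen (L_ideal \<phi> s \<union> minors_ideal r B' n')"
    unfolding eq
  proof (rule ideal_gen_least[OF ideal_gen_is_ideal])
    have "a_ideal a r B n \<subseteq> ideal_gen (L_ideal \<phi> s \<union> minors_ideal r B' n')"
      using step.IH ideal_gen_mono[of "L_ideal \<phi> s \<union> minors_ideal r B n" "L_ideal \<phi> s \<union> minors_ideal r B' n'"] mm
      by blast
    moreover have "minors_ideal r B n \<inter> ideal_a a r \<subseteq> ideal_gen (L_ideal \<phi> s \<union> minors_ideal r B' n')"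
      using mm by (auto intro: ideal_gen_base)
    ultimately show "a_ideal a r B n \<union> (minors_ideal r B n \<inter> ideal_a a r) \<subseteq> ideal_gen (L_ideal \<phi> s \<union> minors_ideal r B' n')"
      by blast
  qed
  ultimately show ?case using step.IH by blast
qed

lemma iterated_K:
  assumes "iterated_jd \<phi> s a r i B n"
  shows "ideal_gen (L_ideal \<phi> s \<union> minors_ideal r B n) = ideal_gen (a_ideal a r B n \<union> minors_ideal r B n)"
proof
  have h: "L_ideal \<phi> s \<subseteq> a_ideal a r B n" "a_ideal a r B n \<subseteq> ideal_gen (L_ideal \<phi> s \<union> minors_ideal r B n)"
    using iterated_L[OF assms] by auto
  show "ideal_gen (L_ideal \<phi> s \<union> minors_ideal r B n) \<subseteq> ideal_gen (a_ideal a r B n \<union> minors_ideal r B n)"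
    using h(1) by (intro ideal_gen_mono) auto
  show "ideal_gen (a_ideal a r B n \<union> minors_ideal r B n) \<subseteq> ideal_gen (L_ideal \<phi> s \<union> minors_ideal r B n)"
    using h(2) by (intro ideal_gen_least[OF ideal_gen_is_ideal]) (auto intro: ideal_gen_base)
qed

lemma K_sub:
  fixes a :: "nat \<Rightarrow> 'a::comm_ring_1" and B B' :: "nat \<Rightarrow> nat \<Rightarrow> ('v, 'a) mpoly"
  assumes reg: "regseq a r" and eq: "a_ideal a r B n = a_ideal a r B' n'"
  shows "ideal_gen (a_ideal a r B' n' \<union> minors_ideal r B' n') \<subseteq> ideal_gen (a_ideal a r B n \<union> minors_ideal r B n)"
proof -
  have cols: "\<forall>k<n'. atv (\<lambda>i. const (a i)) r B' k \<in> ideal_gen (atv (\<lambda>i. const (a i)) r B ` {..<n})"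
    using eq unfolding a_ideal_atv by (auto intro: ideal_gen_base)
  have "minors_ideal r B' n' \<subseteq> ideal_gen (a_ideal a r B n \<union> minors_ideal r B n)"
    using main_minors[OF regseq_poly[OF reg] cols] unfolding a_ideal_atv .
  then show ?thesis
    using eq by (intro ideal_gen_least[OF ideal_gen_is_ideal]) (auto intro: ideal_gen_base)
qed

lemma iterated_a_eq:
  fixes a :: "nat \<Rightarrow> 'a::comm_ring_1" and \<phi> :: "'v::finite \<Rightarrow> nat \<Rightarrow> 'a"
  assumes reg: "regseq a r"
  shows "\<forall>B n B' n'. iterated_jd \<phi> s a r i B n \<longrightarrow> iterated_jd \<phi> s a r i B' n' \<longrightarrow>
           a_ideal a r B n = a_ideal a r B' n'"
proof (induction i)
  case 0
  then show ?case by (auto dest: iterated_pos)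
next
  case (Suc i)
  show ?case
  proof (intro allI impI)
    fix B n B' n'
    assume h1: "iterated_jd \<phi> s a r (Suc i) B n" and h2: "iterated_jd \<phi> s a r (Suc i) B' n'"
    show "a_ideal a r B n = a_ideal a r B' n'"
    proof (cases "i = 0")
      case True
      have "a_ideal a r B n = L_ideal \<phi> s" if "iterated_jd \<phi> s a r (Suc 0) B n" for B n
        using that
      proof (cases rule: iterated_jd.cases)
        case (first)
        then show ?thesis
          unfolding L_ideal_def a_ideal_def jd_first_def by (intro arg_cong[where f=ideal_gen] image_cong) auto
      next
        case (step B0 n0)
        then show ?thesis by (auto dest: iterated_pos)
      qed
      then show ?thesis using h1 h2 True by simp
    next
      case False
      have key: "a_ideal a r B n = ideal_gen (a_ideal a r B0 n0 \<union> minors_ideal r B0 n0) \<inter> ideal_a a r"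
        if "jd_step a r B0 n0 B n" for B0 B :: "nat \<Rightarrow> nat \<Rightarrow> ('v, 'a) mpoly" and n0 n
        unfolding step_a_ideal[OF that]
        by (rule modular_law[symmetric])
           (simp_all add: a_ideal_sub, simp_all add: a_ideal_def minors_ideal_def ideal_a_def ideal_gen_is_ideal)
      obtain B0 n0 where A: "iterated_jd \<phi> s a r i B0 n0" "jd_step a r B0 n0 B n"
        using h1 False by (cases rule: iterated_jd.cases) auto
      obtain B0' n0' where A': "iterated_jd \<phi> s a r i B0' n0'" "jd_step a r B0' n0' B' n'"
        using h2 False by (cases rule: iterated_jd.cases) auto
      have e: "a_ideal a r B0 n0 = a_ideal a r B0' n0'" by (rule Suc.IH[rule_format, OF A(1) A'(1)])
      have "ideal_gen (a_ideal a r B0 n0 \<union> minors_ideal r B0 n0) = ideal_gen (a_ideal a r B0' n0' \<union> minors_ideal r B0' n0')"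
        using K_sub[OF reg e] K_sub[OF reg e[symmetric]] by blast
      then show ?thesis using key[OF A(2)] key[OF A'(2)] by simp
    qed
  qed
qed

theorem theorem4p5:
  fixes \<phi> :: "'v::finite \<Rightarrow> nat \<Rightarrow> 'a::comm_ring_1"
    and s r :: nat
    and a :: "nat \<Rightarrow> 'a"
  assumes noeth: "noetherian_ring TYPE('a)"
    and I1: "\<forall>v. \<forall>k<s. \<phi> v k \<in> ideal_gen (a ` {..<r})"
    and reg: "regular_sequence a r"
  shows "\<forall>i\<ge>1. \<forall>B n B' n'.
           iterated_jd \<phi> s a r i B n \<longrightarrow> iterated_jd \<phi> s a r i B' n' \<longrightarrow>
           ideal_gen (L_ideal \<phi> s \<union> minors_ideal r B n)
             = ideal_gen (L_ideal \<phi> s \<union> minors_ideal r B' n')"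
proof (intro allI impI)
  fix i B n B' n'
  assume h1: "iterated_jd \<phi> s a r i B n" and h2: "iterated_jd \<phi> s a r i B' n'"
  have rs: "regseq a r" using reg unfolding regular_sequence_def regseq_def by blast
  have e: "a_ideal a r B n = a_ideal a r B' n'" by (rule iterated_a_eq[OF rs, of \<phi> s i, rule_format, OF h1 h2])
  have "ideal_gen (a_ideal a r B n \<union> minors_ideal r B n) = ideal_gen (a_ideal a r B' n' \<union> minors_ideal r B' n')"
    using K_sub[OF rs e] K_sub[OF rs e[symmetric]] by blast
  then show "ideal_gen (L_ideal \<phi> s \<union> minors_ideal r B n) = ideal_gen (L_ideal \<phi> s \<union> minors_ideal r B' n')"
    unfolding iterated_K[OF h1] iterated_K[OF h2] .
qed

end
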